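(* Let $n$ be a positive integer and $d\in\Delta(n)$. Write $d=(d_1,\dots,d_L)$ with $d_L>0$ its last nonzero entry and let $q=\max_k d_k$, so that $d=(1,2,\dots,q,d_{q+1},\dots,d_L)$ with $d_{q+1}\le q$. Set $b_i=d_i-d_{i+1}$ for $q\le i<L$ and $b_L=d_L$. Then for every integer $k$ with $q<k\le L$, \[\big|\,[\,d\,]_k\,\big|=\big|\,[\,d\,]\cap\mathcal{P}(n,k)\,\big|=\binom{b_{k-1}+b_k}{b_{k-1}+1}\prod_{i=q}^{k-2}\binom{b_i+b_{i+1}+1}{b_i+1}\prod_{i=k}^{L-1}\binom{b_i+b_{i+1}}{b_i},\] where empty products equal $1$.
   Context: A partition of a positive integer $n$ is a finite non-increasing sequence $\alpha=(\alpha_1,\dots,\alpha_l)$ of positive integers with sum $n$; $\mathcal{P}(n)$ is the set of partitions of $n$, $\alpha_i=0$ for $i>l$, and $\mathcal{P}(n,k)$ is the set of partitions of $n$ with exactly $k$ nonzero parts. The diagonal sequence is $\delta(\alpha)=(d_k)_{k\ge1}$ with $d_k=|\{i:1\le i\le k,\ \alpha_i+i-1\ge k\}|$, trailing zeros omitted; $\Delta(n)=\{\delta(\alpha):\alpha\in\mathcal{P}(n)\}$, $[\,d\,]=\{\alpha\in\mathcal{P}(n):\delta(\alpha)=d\}$, and $[\,d\,]_k=[\,d\,]\cap\mathcal{P}(n,k)$. *)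

theory Defs
  imports Main
begin

definition partitions :: "nat \<Rightarrow> nat list set" where
  "partitions n = {\<alpha>. sorted_wrt (\<ge>) \<alpha> \<and> 0 \<notin> set \<alpha> \<and> sum_list \<alpha> = n}"

definition partitions_k :: "nat \<Rightarrow> nat \<Rightarrow> nat list set" where
  "partitions_k n k = {\<alpha> \<in> partitions n. length \<alpha> = k}"

definition part :: "nat list \<Rightarrow> nat \<Rightarrow> nat" where
  "part \<alpha> i = (if 1 \<le> i \<and> i \<le> length \<alpha> then \<alpha> ! (i - 1) else 0)"

text \<open>Diagonal sequence, 1-indexed (value at index 0 is 0); trailing zeros are
  represented implicitly by the function being 0 there.\<close>
definition diag :: "nat list \<Rightarrow> nat \<Rightarrow> nat" where
  "diag \<alpha> k = card {i. 1 \<le> i \<and> i \<le> k \<and> part \<alpha> i + i - 1 \<ge> k}"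

definition Delta :: "nat \<Rightarrow> (nat \<Rightarrow> nat) set" where
  "Delta n = diag ` partitions n"

definition diag_class :: "nat \<Rightarrow> (nat \<Rightarrow> nat) \<Rightarrow> nat list set" where
  "diag_class n d = {\<alpha> \<in> partitions n. diag \<alpha> = d}"

end

theory Submission
  imports Defs "HOL-Library.Multiset"
begin


fun ch :: "nat \<Rightarrow> nat list \<Rightarrow> bool" where
  "ch p [] = True"
| "ch p (x # xs) = (x \<le> Suc p \<and> ch x xs)"

fun iok :: "nat \<Rightarrow> nat \<Rightarrow> nat list \<Rightarrow> bool" where
  "iok M p [] = True"
| "iok M p (x # xs) = ((x = M \<longrightarrow> M \<le> Suc p) \<and> iok M x xs)"

definition SS :: "nat \<Rightarrow> nat multiset \<Rightarrow> nat \<Rightarrow> nat list set" where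
  "SS M C T = {xs. mset xs = C \<and> ch M xs \<and> (xs \<noteq> [] \<longrightarrow> T \<le> last xs)}"

definition Fib :: "nat \<Rightarrow> nat \<Rightarrow> nat list \<Rightarrow> nat \<Rightarrow> nat list set" where
  "Fib M p ys m = {xs. filter (\<lambda>x. x \<noteq> M) xs = ys \<and> count_list xs M = m \<and> iok M p xs}"

lemma finite_mset_lists: "finite {xs. mset xs = C}"
proof -
  have "{xs. mset xs = C} \<subseteq> {xs. set xs \<subseteq> set_mset C \<and> length xs = size C}"
    by auto
  moreover have "finite {xs. set xs \<subseteq> set_mset C \<and> length xs = size C}"
    by (rule finite_lists_length_eq) simp
  ultimately show ?thesis by (rule finite_subset)
qed

lemma filter_all_eq: "filter (\<lambda>x. x \<noteq> M) xs = [] \<longleftrightarrow> xs = replicate (length xs) M"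
  by (induction xs) auto

lemma mset_split: "mset xs = mset (filter (\<lambda>x. x \<noteq> M) xs) + replicate_mset (count_list xs M) M"
  by (induction xs) auto

lemma finite_Fib: "finite (Fib M p ys m)"
proof (rule finite_subset[of _ "{xs. mset xs = mset ys + replicate_mset m M}"])
  show "Fib M p ys m \<subseteq> {xs. mset xs = mset ys + replicate_mset m M}"
  proof
    fix xs assume "xs \<in> Fib M p ys m"
    then have "filter (\<lambda>x. x \<noteq> M) xs = ys" "count_list xs M = m" unfolding Fib_def by auto
    then show "xs \<in> {xs. mset xs = mset ys + replicate_mset m M}"
      using mset_split[of xs M] by simp
  qed
qed (rule finite_mset_lists)

lemma iok_rep: "iok M M (replicate k M)"
  by (induction k) auto

lemma iok_rep': "iok M p (replicate m M) \<longleftrightarrow> m = 0 \<or> M \<le> Suc p"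
  by (cases m) (simp_all add: iok_rep)

lemma Fib_Nil_mem: "xs \<in> Fib M p [] m \<longleftrightarrow> xs = replicate m M \<and> (m = 0 \<or> M \<le> Suc p)"
proof
  assume "xs \<in> Fib M p [] m"
  then have a: "filter (\<lambda>x. x \<noteq> M) xs = []" "count_list xs M = m" "iok M p xs"
    unfolding Fib_def by auto
  have r: "xs = replicate (length xs) M" using filter_all_eq[THEN iffD1, OF a(1)] .
  have cr: "count_list (replicate k M) M = k" for k by (induction k) auto
  obtain k where k: "xs = replicate k M" using r by (rule that)
  then have "xs = replicate m M" using cr[of k] a(2) by simp
  then show "xs = replicate m M \<and> (m = 0 \<or> M \<le> Suc p)" using a(3) iok_rep' by simp
next
  assume h: "xs = replicate m M \<and> (m = 0 \<or> M \<le> Suc p)"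
  have "filter (\<lambda>x. x \<noteq> M) (replicate m M) = []" by (induction m) auto
  moreover have "count_list (replicate m M) M = m" by (induction m) auto
  ultimately show "xs \<in> Fib M p [] m" unfolding Fib_def using h iok_rep' by simp
qed

lemma Fib_Nil: "Fib M p [] m = (if m = 0 \<or> M \<le> Suc p then {replicate m M} else {})"
  by (rule set_eqI) (simp add: Fib_Nil_mem)

lemma Fib_Cons:
  assumes "y \<noteq> M"
  shows "Fib M p (y # ys) m =
    (if M \<le> Suc p \<and> 0 < m then Cons M ` Fib M M (y # ys) (m - 1) else {}) \<union> Cons y ` Fib M y ys m"
  (is "?L = ?R")
proof
  show "?L \<subseteq> ?R"
  proof
    fix xs assume "xs \<in> ?L"
    then have a: "filter (\<lambda>x. x \<noteq> M) xs = y # ys" "count_list xs M = m" "iok M p xs"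
      unfolding Fib_def by auto
    then obtain x xs' where xs: "xs = x # xs'" by (cases xs) auto
    show "xs \<in> ?R"
    proof (cases "x = M")
      case True
      then have "xs' \<in> Fib M M (y # ys) (m - 1)" "M \<le> Suc p" "0 < m"
        using a xs unfolding Fib_def by auto
      then show ?thesis using xs True by auto
    next
      case False
      then have "x = y" "xs' \<in> Fib M y ys m" using a xs unfolding Fib_def by auto
      then show ?thesis using xs by auto
    qed
  qed
next
  show "?R \<subseteq> ?L"
    using assms unfolding Fib_def by (auto split: if_splits)
qed

lemma Fib_card:
  assumes "\<forall>y\<in>set ys. y < M"
  shows "card (Fib M p ys m) =
    (m + ((if M \<le> Suc p then 1 else 0) + count_list ys (M - 1)) - 1) choose m"
  using assms
proof (induction ys arbitrary: p m)
  case Nil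
  show ?case
  proof (cases "M \<le> Suc p")
    case True then show ?thesis by (simp add: Fib_Nil)
  next
    case False then show ?thesis by (cases m) (simp_all add: Fib_Nil)
  qed
next
  case (Cons y ys)
  have yM: "y < M" "y \<noteq> M" using Cons.prems by auto
  have ysM: "\<forall>y\<in>set ys. y < M" using Cons.prems by auto
  define s' where "s' = count_list (y # ys) (M - 1)"
  have IHo: "card (Fib M y ys m') = (m' + s' - 1) choose m'" for m'
  proof -
    have "(if M \<le> Suc y then 1 else 0) + count_list ys (M - 1) = s'"
      unfolding s'_def using yM by auto
    then show ?thesis using Cons.IH[OF ysM, of y m'] by simp
  qed
  show ?case
  proof (induction m arbitrary: p)
    case 0
    have "Fib M p (y # ys) 0 = Cons y ` Fib M y ys 0"
      using Fib_Cons[OF yM(2), of p ys 0] by simp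
    then have "card (Fib M p (y # ys) 0) = card (Fib M y ys 0)"
      by (simp add: card_image)
    then show ?case using IHo[of 0] by simp
  next
    case (Suc m)
    show ?case
    proof (cases "M \<le> Suc p")
      case False
      have "Fib M p (y # ys) (Suc m) = Cons y ` Fib M y ys (Suc m)"
        using Fib_Cons[OF yM(2), of p ys "Suc m"] False by simp
      then have "card (Fib M p (y # ys) (Suc m)) = card (Fib M y ys (Suc m))"
        by (simp add: card_image)
      then show ?thesis using IHo[of "Suc m"] False s'_def by simp
    next
      case True
      have e: "Fib M p (y # ys) (Suc m) = Cons M ` Fib M M (y # ys) m \<union> Cons y ` Fib M y ys (Suc m)"
        using Fib_Cons[OF yM(2), of p ys "Suc m"] True by simp
      have card1: "card (Fib M M (y # ys) m) = (m + (1 + s')) - 1 choose m"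
        using Suc.IH[of M] s'_def by simp
      have "card (Fib M p (y # ys) (Suc m)) = card (Fib M M (y # ys) m) + card (Fib M y ys (Suc m))"
        unfolding e
        using yM(2) by (subst card_Un_disjoint) (auto simp: card_image finite_Fib)
      also have "\<dots> = (m + s' choose m) + (m + s' choose Suc m)"
        using card1 IHo[of "Suc m"] by simp
      also have "\<dots> = Suc (m + s') choose Suc m" by simp
      finally show ?thesis using True s'_def by simp
    qed
  qed
qed



lemma ch_filter:
  assumes "\<forall>x\<in>set xs. x \<le> M" "p \<le> M"
  shows "ch p xs \<longleftrightarrow> iok M p xs \<and> ch (if p = M then M - 1 else p) (filter (\<lambda>x. x \<noteq> M) xs)"
  using assms
proof (induction xs arbitrary: p)
  case Nil then show ?case by simp
next
  case (Cons x xs)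
  have xM: "x \<le> M" and xsM: "\<forall>x\<in>set xs. x \<le> M" using Cons.prems by auto
  have IH: "ch x xs \<longleftrightarrow> iok M x xs \<and> ch (if x = M then M - 1 else x) (filter (\<lambda>x. x \<noteq> M) xs)"
    using Cons.IH[OF xsM xM] .
  show ?case
  proof (cases "x = M")
    case True
    have pp: "M \<le> Suc p \<Longrightarrow> p \<noteq> M \<Longrightarrow> p = M - 1" using Cons.prems(2) by arith
    show ?thesis
    proof (cases "M \<le> Suc p \<and> p \<noteq> M")
      case c: True
      then have "p = M - 1" using pp by blast
      then show ?thesis using IH True c by auto
    next
      case False
      then show ?thesis using IH True by auto
    qed
  next
    case False
    then have "x < M" using xM by simp
    then show ?thesis using IH Cons.prems(2) False by auto
  qed
qed

lemma last_filter_M: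
  assumes "iok M p xs" "\<forall>x\<in>set xs. x \<le> M" "filter (\<lambda>x. x \<noteq> M) xs \<noteq> []" "last xs = M"
  shows "last (filter (\<lambda>x. x \<noteq> M) xs) = M - 1"
  using assms
proof (induction xs arbitrary: p)
  case Nil then show ?case by simp
next
  case (Cons x xs)
  show ?case
  proof (cases "filter (\<lambda>x. x \<noteq> M) xs = []")
    case False
    then have "xs \<noteq> []" by auto
    then have "last xs = M" using Cons.prems(4) by simp
    then have "last (filter (\<lambda>x. x \<noteq> M) xs) = M - 1"
      using Cons.IH[of x] Cons.prems False by auto
    then show ?thesis using False by simp
  next
    case True
    then have xne: "x \<noteq> M" using Cons.prems(3) by auto
    then have "xs \<noteq> []" using Cons.prems(4) by auto
    then obtain z zs where xs: "xs = z # zs" by (cases xs) auto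
    have "z = M" using True xs by (auto split: if_splits)
    then have "M \<le> Suc x" using Cons.prems(1) xs by simp
    then have "x = M - 1" using xne Cons.prems(2) by auto
    then show ?thesis using True xne by simp
  qed
qed

lemma last_filter_nM:
  assumes "xs \<noteq> []" "last xs \<noteq> M"
  shows "filter (\<lambda>x. x \<noteq> M) xs \<noteq> [] \<and> last (filter (\<lambda>x. x \<noteq> M) xs) = last xs"
  using assms
proof (induction xs)
  case Nil then show ?case by simp
next
  case (Cons x xs)
  then show ?case by (cases "xs = []") auto
qed

lemma mset_filter_iff:
  "mset xs = C \<longleftrightarrow>
     mset (filter (\<lambda>x. x \<noteq> M) xs) = filter_mset (\<lambda>x. x \<noteq> M) C \<and> count_list xs M = count C M"
proof
  assume "mset xs = C"
  then show "mset (filter (\<lambda>x. x \<noteq> M) xs) = filter_mset (\<lambda>x. x \<noteq> M) C \<and> count_list xs M = count C M"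
    by (auto simp: count_mset[symmetric])
next
  assume h: "mset (filter (\<lambda>x. x \<noteq> M) xs) = filter_mset (\<lambda>x. x \<noteq> M) C \<and> count_list xs M = count C M"
  have "C = filter_mset (\<lambda>x. x \<noteq> M) C + replicate_mset (count C M) M"
    by (rule multiset_eqI) auto
  then show "mset xs = C" using mset_split[of xs M] h by simp
qed

lemma SS_finite: "finite (SS M C T)"
  by (rule finite_subset[OF _ finite_mset_lists[of C]]) (auto simp: SS_def)

lemma SS_rec:
  assumes "T < M" "set_mset C \<subseteq> {..M}"
  shows "card (SS M C T) =
    (count C M + count C (M - 1) choose count C M) * card (SS (M - 1) (filter_mset (\<lambda>x. x \<noteq> M) C) T)"
proof -
  define C' where "C' = filter_mset (\<lambda>x. x \<noteq> M) C"
  define m where "m = count C M"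
  have mem: "xs \<in> SS M C T \<longleftrightarrow> filter (\<lambda>x. x \<noteq> M) xs \<in> SS (M - 1) C' T \<and> xs \<in> Fib M M (filter (\<lambda>x. x \<noteq> M) xs) m" for xs
  proof (cases "mset xs = C")
    case False
    then show ?thesis unfolding SS_def Fib_def C'_def m_def using mset_filter_iff[of xs C M] by auto
  next
    case True
    then have le: "\<forall>x\<in>set xs. x \<le> M" using assms(2) by auto
    have chx: "ch M xs \<longleftrightarrow> iok M M xs \<and> ch (M - 1) (filter (\<lambda>x. x \<noteq> M) xs)"
      using ch_filter[OF le, of M] by simp
    have lastx: "(xs \<noteq> [] \<longrightarrow> T \<le> last xs) \<longleftrightarrow>
        (filter (\<lambda>x. x \<noteq> M) xs \<noteq> [] \<longrightarrow> T \<le> last (filter (\<lambda>x. x \<noteq> M) xs))"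
      if "iok M M xs"
    proof (cases "xs = []")
      case True then show ?thesis by simp
    next
      case False
      show ?thesis
      proof (cases "last xs = M")
        case True
        then show ?thesis using last_filter_M[OF that le _ True] assms(1) False by auto
      next
        case ne: False
        then show ?thesis using last_filter_nM[OF False ne] False by auto
      qed
    qed
    show ?thesis unfolding SS_def Fib_def C'_def m_def
      using True mset_filter_iff[of xs C M] chx lastx by (auto simp: count_mset[symmetric])
  qed
  have eq: "SS M C T = (\<Union>ys\<in>SS (M - 1) C' T. Fib M M ys m)"
    using mem unfolding Fib_def by blast
  have "card (SS M C T) = (\<Sum>ys\<in>SS (M - 1) C' T. card (Fib M M ys m))"
    unfolding eq
  proof (rule card_UN_disjoint)
    show "finite (SS (M - 1) C' T)" by (rule SS_finite)
    show "\<forall>i\<in>SS (M - 1) C' T. finite (Fib M M i m)" using finite_Fib by blast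
    show "\<forall>i\<in>SS (M - 1) C' T. \<forall>j\<in>SS (M - 1) C' T. i \<noteq> j \<longrightarrow> Fib M M i m \<inter> Fib M M j m = {}"
      unfolding Fib_def by blast
  qed
  also have "\<dots> = (\<Sum>ys\<in>SS (M - 1) C' T. (m + count C (M - 1) choose m))"
  proof (rule sum.cong)
    fix ys assume ys: "ys \<in> SS (M - 1) C' T"
    then have ms: "mset ys = C'" unfolding SS_def by auto
    have lt: "\<forall>y\<in>set ys. y < M"
    proof
      fix y assume "y \<in> set ys"
      then have "y \<in># C'" using ms by auto
      then show "y < M" using assms(2) unfolding C'_def by auto
    qed
    have M1: "M - 1 \<noteq> M" using assms(1) by simp
    have "count_list ys (M - 1) = count (mset ys) (M - 1)" by (simp add: count_mset)
    also have "\<dots> = count C' (M - 1)" using ms by simp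
    also have "\<dots> = count C (M - 1)" unfolding C'_def using M1 by simp
    finally have "count_list ys (M - 1) = count C (M - 1)" .
    then show "card (Fib M M ys m) = (m + count C (M - 1) choose m)"
      using Fib_card[OF lt, of M m] by simp
  qed simp
  finally show ?thesis unfolding m_def C'_def by (simp add: mult.commute)
qed

lemma ch_snoc: "ch p (xs @ [x]) \<longleftrightarrow> ch p xs \<and> x \<le> Suc (if xs = [] then p else last xs)"
  by (induction xs arbitrary: p) auto

lemma SS_top:
  assumes "set_mset C \<subseteq> {..M}" "0 < count C M"
  shows "card (SS M C M) = card (SS M (C - {#M#}) (M - 1))"
proof -
  have "SS M C M = (\<lambda>xs. xs @ [M]) ` SS M (C - {#M#}) (M - 1)"
  proof
    show "SS M C M \<subseteq> (\<lambda>xs. xs @ [M]) ` SS M (C - {#M#}) (M - 1)"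
    proof
      fix xs assume xs: "xs \<in> SS M C M"
      then have ms: "mset xs = C" and c: "ch M xs" and l: "xs \<noteq> [] \<longrightarrow> M \<le> last xs"
        unfolding SS_def by auto
      have ne: "xs \<noteq> []" using ms assms(2) by auto
      have "last xs \<in> set xs" using ne by simp
      then have "last xs \<le> M" using ms assms(1) by auto
      then have lM: "last xs = M" using l ne by simp
      define ys where "ys = butlast xs"
      have xe: "xs = ys @ [M]" using ne lM unfolding ys_def by (metis append_butlast_last_id)
      have "mset ys = C - {#M#}" using ms xe by auto
      moreover have "ch M ys" "ys \<noteq> [] \<longrightarrow> M - 1 \<le> last ys"
        using c xe ch_snoc[of M ys M] by auto
      ultimately show "xs \<in> (\<lambda>xs. xs @ [M]) ` SS M (C - {#M#}) (M - 1)"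
        using xe unfolding SS_def by auto
    qed
  next
    show "(\<lambda>xs. xs @ [M]) ` SS M (C - {#M#}) (M - 1) \<subseteq> SS M C M"
    proof
      fix xs assume "xs \<in> (\<lambda>xs. xs @ [M]) ` SS M (C - {#M#}) (M - 1)"
      then obtain ys where xe: "xs = ys @ [M]" and ys: "ys \<in> SS M (C - {#M#}) (M - 1)" by auto
      have "M \<in># C" using assms(2) by (simp add: count_greater_zero_iff)
      then have "mset xs = C" using ys xe unfolding SS_def by auto
      moreover have "ch M xs" using ys xe ch_snoc[of M ys M] unfolding SS_def by auto
      ultimately show "xs \<in> SS M C M" using xe unfolding SS_def by auto
    qed
  qed
  moreover have "inj_on (\<lambda>xs. xs @ [M]) (SS M (C - {#M#}) (M - 1))"
    by (rule inj_onI) simp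
  ultimately show ?thesis by (simp add: card_image)
qed

lemma SS_empty:
  assumes "set_mset C \<subseteq> {..<T}" "C \<noteq> {#}"
  shows "SS M C T = {}"
proof -
  have False if "xs \<in> SS M C T" for xs
  proof -
    have ms: "mset xs = C" and l: "xs \<noteq> [] \<longrightarrow> T \<le> last xs" using that unfolding SS_def by auto
    have ne: "xs \<noteq> []" using ms assms(2) by auto
    have "last xs \<in> set xs" using ne by simp
    then have "last xs < T" using ms assms(1) by auto
    then show False using l ne by simp
  qed
  then show ?thesis by blast
qed

lemma SS_nil: "SS M {#} T = {[]}"
  unfolding SS_def by auto


lemma phase2:
  assumes "set_mset C \<subseteq> {1..M}"
    and "\<forall>v. 1 \<le> v \<longrightarrow> v \<le> M \<longrightarrow> count C v = 0 \<longrightarrow> (\<forall>u<v. count C u = 0)"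
  shows "card (SS M C M) = (\<Prod>v\<in>{1..M}. if count C v = 0 then 1
            else (count C v - 1 + count C (v - 1)) choose (count C v - 1))"
  using assms
proof (induction M arbitrary: C)
  case 0
  then have "C = {#}" by auto
  then show ?case by (simp add: SS_nil)
next
  case (Suc M)
  define N where "N = Suc M"
  show ?case
  proof (cases "count C (Suc M) = 0")
    case True
    then have z: "\<forall>u<Suc M. count C u = 0" using Suc.prems(2) by auto
    have "C = {#}"
    proof (rule multiset_eqI)
      fix x
      show "count C x = count {#} x"
      proof (cases "x \<le> Suc M")
        case True
        then show ?thesis using z \<open>count C (Suc M) = 0\<close> by (cases "x = Suc M") auto
      next
        case False
        then have "x \<notin># C" using Suc.prems(1) by auto
        then show ?thesis by (simp add: not_in_iff)
      qed
    qed
    then show ?thesis by (simp add: SS_nil)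
  next
    case False
    define C1 where "C1 = C - {#Suc M#}"
    define C2 where "C2 = filter_mset (\<lambda>x. x \<noteq> Suc M) C1"
    have sC: "set_mset C \<subseteq> {..Suc M}" using Suc.prems(1) by auto
    have sC1: "set_mset C1 \<subseteq> {..Suc M}" using sC unfolding C1_def by (meson in_diffD subset_iff)
    have c1: "card (SS (Suc M) C (Suc M)) = card (SS (Suc M) C1 M)"
      using SS_top[OF sC] False unfolding C1_def by simp
    have c2: "card (SS (Suc M) C1 M) =
        (count C1 (Suc M) + count C1 M choose count C1 (Suc M)) * card (SS M C2 M)"
      using SS_rec[OF _ sC1, of M] unfolding C2_def by simp
    have cnt2: "count C2 v = (if v = Suc M then 0 else count C v)" for v
      unfolding C2_def C1_def by auto
    have sC2: "set_mset C2 \<subseteq> {1..M}"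
    proof
      fix x assume "x \<in># C2"
      then have "count C2 x > 0" by simp
      then have "x \<noteq> Suc M" "count C x > 0" using cnt2[of x] by (auto split: if_splits)
      then show "x \<in> {1..M}" using Suc.prems(1) by (auto simp: count_greater_zero_iff)
    qed
    have zp2: "\<forall>v. 1 \<le> v \<longrightarrow> v \<le> M \<longrightarrow> count C2 v = 0 \<longrightarrow> (\<forall>u<v. count C2 u = 0)"
      using Suc.prems(2) by (auto simp: cnt2)
    have IH: "card (SS M C2 M) = (\<Prod>v\<in>{1..M}. if count C2 v = 0 then 1
            else (count C2 v - 1 + count C2 (v - 1)) choose (count C2 v - 1))"
      using Suc.IH[OF sC2 zp2] .
    also have "\<dots> = (\<Prod>v\<in>{1..M}. if count C v = 0 then 1
            else (count C v - 1 + count C (v - 1)) choose (count C v - 1))"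
      by (rule prod.cong) (auto simp: cnt2)
    finally have IH': "card (SS M C2 M) = \<dots>" .
    have "count C1 (Suc M) = count C (Suc M) - 1" "count C1 M = count C M"
      unfolding C1_def by auto
    then have c3: "card (SS (Suc M) C (Suc M)) =
      (count C (Suc M) - 1 + count C M choose (count C (Suc M) - 1)) * card (SS M C2 M)"
      using c1 c2 by simp
    show ?thesis unfolding c3 IH' using False by (simp add: prod.cl_ivl_Suc)
  qed
qed

lemma phase1:
  assumes "T \<le> M" "set_mset C \<subseteq> {..M}"
  shows "card (SS M C T) = (\<Prod>v\<in>{Suc T..M}. (count C v + count C (v - 1)) choose count C v)
           * card (SS T (filter_mset (\<lambda>x. x \<le> T) C) T)"
  using assms
proof (induction M arbitrary: C)
  case 0
  then have "filter_mset (\<lambda>x. x \<le> T) C = C" by (auto intro!: filter_mset_eq_conv[THEN iffD2])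
  then show ?case using 0 by simp
next
  case (Suc M)
  show ?case
  proof (cases "T = Suc M")
    case True
    then have "filter_mset (\<lambda>x. x \<le> T) C = C" using Suc.prems(2)
      by (auto intro!: filter_mset_eq_conv[THEN iffD2])
    then show ?thesis using True by simp
  next
    case False
    then have TM: "T \<le> M" using Suc.prems(1) by simp
    define C2 where "C2 = filter_mset (\<lambda>x. x \<noteq> Suc M) C"
    have c1: "card (SS (Suc M) C T) =
        (count C (Suc M) + count C M choose count C (Suc M)) * card (SS M C2 T)"
      using SS_rec[OF _ Suc.prems(2), of T] TM unfolding C2_def by simp
    have sC2: "set_mset C2 \<subseteq> {..M}" using Suc.prems(2) unfolding C2_def by auto
    have cnt2: "count C2 v = (if v = Suc M then 0 else count C v)" for v
      unfolding C2_def by auto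
    have "card (SS M C2 T) = (\<Prod>v\<in>{Suc T..M}. (count C2 v + count C2 (v - 1)) choose count C2 v)
           * card (SS T (filter_mset (\<lambda>x. x \<le> T) C2) T)"
      using Suc.IH[OF TM sC2] .
    also have "(\<Prod>v\<in>{Suc T..M}. (count C2 v + count C2 (v - 1)) choose count C2 v) =
       (\<Prod>v\<in>{Suc T..M}. (count C v + count C (v - 1)) choose count C v)"
      by (rule prod.cong) (auto simp: cnt2)
    also have "filter_mset (\<lambda>x. x \<le> T) C2 = filter_mset (\<lambda>x. x \<le> T) C"
      unfolding C2_def using TM by (auto intro: multiset_eqI)
    finally have IH': "card (SS M C2 T) = (\<Prod>v\<in>{Suc T..M}. (count C v + count C (v - 1)) choose count C v)
           * card (SS T (filter_mset (\<lambda>x. x \<le> T) C) T)" .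
    show ?thesis unfolding c1 IH' using TM by (simp add: prod.cl_ivl_Suc)
  qed
qed

lemma diag_alt: "diag \<alpha> k = card {j. j < length \<alpha> \<and> j < k \<and> k \<le> \<alpha> ! j + j}"
proof -
  have "{i. 1 \<le> i \<and> i \<le> k \<and> part \<alpha> i + i - 1 \<ge> k} = Suc ` {j. j < length \<alpha> \<and> j < k \<and> k \<le> \<alpha> ! j + j}"
  proof
    show "{i. 1 \<le> i \<and> i \<le> k \<and> part \<alpha> i + i - 1 \<ge> k} \<subseteq> Suc ` {j. j < length \<alpha> \<and> j < k \<and> k \<le> \<alpha> ! j + j}"
    proof
      fix i assume i: "i \<in> {i. 1 \<le> i \<and> i \<le> k \<and> part \<alpha> i + i - 1 \<ge> k}"
      then obtain j where j: "i = Suc j" by (cases i) auto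
      show "i \<in> Suc ` {j. j < length \<alpha> \<and> j < k \<and> k \<le> \<alpha> ! j + j}"
      proof (cases "i \<le> length \<alpha>")
        case True
        then show ?thesis using i j unfolding Defs.part_def by auto
      next
        case False
        then show ?thesis using i j unfolding Defs.part_def by auto
      qed
    qed
    show "Suc ` {j. j < length \<alpha> \<and> j < k \<and> k \<le> \<alpha> ! j + j} \<subseteq> {i. 1 \<le> i \<and> i \<le> k \<and> part \<alpha> i + i - 1 \<ge> k}"
      unfolding Defs.part_def by auto
  qed
  then show ?thesis unfolding Defs.diag_def by (simp add: card_image)
qed

lemma diag_len: "diag \<alpha> k + (length \<alpha> - k) = card {j. j < length \<alpha> \<and> k \<le> \<alpha> ! j + j}"
proof -
  have e: "{j. j < length \<alpha> \<and> k \<le> \<alpha> ! j + j} =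
     {j. j < length \<alpha> \<and> j < k \<and> k \<le> \<alpha> ! j + j} \<union> {k..<length \<alpha>}" by auto
  have "card ({j. j < length \<alpha> \<and> j < k \<and> k \<le> \<alpha> ! j + j} \<union> {k..<length \<alpha>}) =
     card {j. j < length \<alpha> \<and> j < k \<and> k \<le> \<alpha> ! j + j} + card {k..<length \<alpha>}"
    by (rule card_Un_disjoint) auto
  then show ?thesis unfolding e diag_alt by simp
qed

lemma diag_le: "diag \<alpha> k \<le> k"
proof -
  have "card {j. j < length \<alpha> \<and> j < k \<and> k \<le> \<alpha> ! j + j} \<le> card {..<k}"
    by (rule card_mono) auto
  then show ?thesis unfolding diag_alt by simp
qed

lemma diag_le_len: "diag \<alpha> k \<le> length \<alpha>"
proof -
  have "card {j. j < length \<alpha> \<and> j < k \<and> k \<le> \<alpha> ! j + j} \<le> card {..<length \<alpha>}"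
    by (rule card_mono) auto
  then show ?thesis unfolding diag_alt by simp
qed

lemma diag_Suc_le: "diag \<alpha> (Suc k) \<le> Suc (diag \<alpha> k)"
proof -
  have "{j. j < length \<alpha> \<and> j < Suc k \<and> Suc k \<le> \<alpha> ! j + j} \<subseteq>
        insert k {j. j < length \<alpha> \<and> j < k \<and> k \<le> \<alpha> ! j + j}" by auto
  then have "card {j. j < length \<alpha> \<and> j < Suc k \<and> Suc k \<le> \<alpha> ! j + j} \<le>
        card (insert k {j. j < length \<alpha> \<and> j < k \<and> k \<le> \<alpha> ! j + j})"
    by (rule card_mono[rotated]) auto
  also have "\<dots> \<le> Suc (card {j. j < length \<alpha> \<and> j < k \<and> k \<le> \<alpha> ! j + j})"
    by (rule card_insert_le_m1) auto
  finally show ?thesis unfolding diag_alt .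
qed

lemma diag_zero_big: "\<forall>j<length \<alpha>. \<alpha> ! j + j < k \<Longrightarrow> diag \<alpha> k = 0"
  unfolding diag_alt by (auto simp: not_le)

lemma diag_sum:
  assumes "\<forall>j<length \<alpha>. \<alpha> ! j + j < N"
  shows "sum_list \<alpha> = (\<Sum>k<N. diag \<alpha> k)"
proof -
  have "(\<Sum>k<N. diag \<alpha> k) = (\<Sum>k<N. \<Sum>j<length \<alpha>. of_bool (j < k \<and> k \<le> \<alpha> ! j + j))"
  proof (rule sum.cong)
    fix k
    have "(\<Sum>j<length \<alpha>. of_bool (j < k \<and> k \<le> \<alpha> ! j + j)) =
        (of_nat (card ({..<length \<alpha>} \<inter> {j. j < k \<and> k \<le> \<alpha> ! j + j})) :: nat)"
      by (rule sum_of_bool_eq) auto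
    also have "{..<length \<alpha>} \<inter> {j. j < k \<and> k \<le> \<alpha> ! j + j} = {j. j < length \<alpha> \<and> j < k \<and> k \<le> \<alpha> ! j + j}"
      by auto
    finally show "diag \<alpha> k = (\<Sum>j<length \<alpha>. of_bool (j < k \<and> k \<le> \<alpha> ! j + j))"
      unfolding diag_alt by simp
  qed simp
  also have "\<dots> = (\<Sum>j<length \<alpha>. \<Sum>k<N. of_bool (j < k \<and> k \<le> \<alpha> ! j + j))"
    by (rule sum.swap)
  also have "\<dots> = (\<Sum>j<length \<alpha>. \<alpha> ! j)"
  proof (rule sum.cong)
    fix j assume j: "j \<in> {..<length \<alpha>}"
    have "(\<Sum>k<N. of_bool (j < k \<and> k \<le> \<alpha> ! j + j)) =
        (of_nat (card ({..<N} \<inter> {k. j < k \<and> k \<le> \<alpha> ! j + j})) :: nat)"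
      by (rule sum_of_bool_eq) auto
    also have "{..<N} \<inter> {k. j < k \<and> k \<le> \<alpha> ! j + j} = {j<..\<alpha> ! j + j}"
      using assms j by auto
    finally show "(\<Sum>k<N. of_bool (j < k \<and> k \<le> \<alpha> ! j + j)) = \<alpha> ! j" by simp
  qed simp
  also have "\<dots> = sum_list \<alpha>" by (simp add: sum_list_sum_nth atLeast0LessThan)
  finally show ?thesis by simp
qed

lemma ivt_up:
  assumes "\<forall>i. j \<le> i \<longrightarrow> i < m \<longrightarrow> f (Suc i) \<le> Suc (f i)" "f j \<le> V" "V \<le> f m" "j \<le> m"
  shows "\<exists>i. j \<le> i \<and> i \<le> m \<and> f i = V"
  using assms
proof (induction m)
  case 0 then show ?case by auto
next
  case (Suc m)
  show ?case
  proof (cases "f (Suc m) = V")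
    case True then show ?thesis using Suc.prems by auto
  next
    case False
    have jm: "j \<le> m"
    proof (rule ccontr)
      assume "\<not> j \<le> m"
      then have "j = Suc m" using Suc.prems(4) by simp
      then show False using Suc.prems(2,3) False by simp
    qed
    have "f (Suc m) \<le> Suc (f m)" using Suc.prems(1) jm by simp
    then have "V \<le> f m" using Suc.prems(3) False by simp
    then obtain i where "j \<le> i \<and> i \<le> m \<and> f i = V" using Suc.IH Suc.prems(1,2) jm by auto
    then show ?thesis by auto
  qed
qed

lemma key:
  assumes s: "sorted_wrt (\<ge>) \<alpha>" and z: "0 \<notin> set \<alpha>" and lt: "diag \<alpha> k < diag \<alpha> (Suc k)"
  shows "diag \<alpha> (Suc k) = Suc k"
proof -
  define l where "l = length \<alpha>"
  define A where "A x = {j. j < l \<and> x \<le> \<alpha> ! j + j}" for x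
  have h1: "diag \<alpha> k + (l - k) = card (A k)" unfolding A_def l_def by (rule diag_len)
  have h2: "diag \<alpha> (Suc k) + (l - Suc k) = card (A (Suc k))" unfolding A_def l_def by (rule diag_len)
  have sub: "A (Suc k) \<subseteq> A k" unfolding A_def by auto
  have fin: "finite (A k)" unfolding A_def by auto
  have cle: "card (A (Suc k)) \<le> card (A k)" by (rule card_mono[OF fin sub])
  have kl: "k < l"
  proof (rule ccontr)
    assume "\<not> k < l"
    then have "l - k = 0" "l - Suc k = 0" by auto
    then show False using h1 h2 cle lt by arith
  qed
  have "card (A k) \<le> card (A (Suc k))" using h1 h2 lt kl by arith
  then have "card (A (Suc k)) = card (A k)" using cle by arith
  then have AA: "A (Suc k) = A k" by (rule card_subset_eq[OF fin sub])
  have nok: "\<alpha> ! j + j \<noteq> k" if "j < l" for j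
  proof
    assume "\<alpha> ! j + j = k"
    then have "j \<in> A k" "j \<notin> A (Suc k)" using that unfolding A_def by auto
    then show False using AA by simp
  qed
  have all: "Suc k \<le> \<alpha> ! j + j" if "j \<le> k" for j
  proof (rule ccontr)
    assume "\<not> Suc k \<le> \<alpha> ! j + j"
    then have jk: "\<alpha> ! j + j \<le> k" by simp
    have jl: "j < l" using that kl by simp
    define f where "f i = \<alpha> ! i + i" for i
    have step: "\<forall>i. j \<le> i \<longrightarrow> i < l - 1 \<longrightarrow> f (Suc i) \<le> Suc (f i)"
    proof (intro allI impI)
      fix i assume "j \<le> i" "i < l - 1"
      then have "\<alpha> ! Suc i \<le> \<alpha> ! i" using sorted_wrt_nth_less[OF s, of i "Suc i"] l_def by simp
      then show "f (Suc i) \<le> Suc (f i)" unfolding f_def by simp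
    qed
    have "l - 1 < l" using kl by simp
    then have "\<alpha> ! (l - 1) \<in> set \<alpha>" unfolding l_def by simp
    then have "\<alpha> ! (l - 1) \<noteq> 0" using z by metis
    then have "k \<le> f (l - 1)" unfolding f_def using kl by simp
    obtain i where i: "j \<le> i" "i \<le> l - 1" "f i = k"
    proof -
      have "j \<le> l - 1" using jl by simp
      then show ?thesis using ivt_up[OF step, of k] jk \<open>k \<le> f (l - 1)\<close> that unfolding f_def by blast
    qed
    then show False using nok[of i] kl unfolding f_def by simp
  qed
  have "{j. j < length \<alpha> \<and> j < Suc k \<and> Suc k \<le> \<alpha> ! j + j} = {..<Suc k}"
    using all kl unfolding l_def by auto
  then show ?thesis unfolding diag_alt by simp
qed


fun Cm :: "(nat \<Rightarrow> nat) \<Rightarrow> nat \<Rightarrow> nat multiset" where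
  "Cm g 0 = {#}"
| "Cm g (Suc v) = Cm g v + replicate_mset (g v - g (Suc v)) (Suc v)"

lemma Cm_count: "count (Cm g N) v = (if 1 \<le> v \<and> v \<le> N then g (v - 1) - g v else 0)"
  by (induction N) auto

lemma Cm_set: "set_mset (Cm g N) \<subseteq> {1..N}"
proof
  fix x assume "x \<in># Cm g N"
  then have "count (Cm g N) x > 0" by simp
  then show "x \<in> {1..N}" unfolding Cm_count by (auto split: if_splits)
qed

lemma Cm_filter:
  assumes "\<forall>x. g (Suc x) \<le> g x" "k \<le> N"
  shows "size (filter_mset (\<lambda>v. k < v) (Cm g N)) = g k - g N"
  using assms(2)
proof (induction N)
  case 0 then show ?case by simp
next
  case (Suc N)
  show ?case
  proof (cases "k = Suc N")
    case True
    have "filter_mset (\<lambda>v. k < v) (Cm g (Suc N)) = {#}"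
      using Cm_set[of g "Suc N"] True by (auto simp: filter_mset_eq_conv)
    then show ?thesis using True by simp
  next
    case False
    then have kN: "k \<le> N" using Suc.prems by simp
    have "filter_mset (\<lambda>v. k < v) (Cm g (Suc N)) =
        filter_mset (\<lambda>v. k < v) (Cm g N) + replicate_mset (g N - g (Suc N)) (Suc N)"
      using kN by (auto simp: filter_mset_eq_conv)
    then have "size (filter_mset (\<lambda>v. k < v) (Cm g (Suc N))) = (g k - g N) + (g N - g (Suc N))"
      using Suc.IH[OF kN] by simp
    moreover have "g N \<le> g k" using lift_Suc_antimono_le[of g, OF _ kN] assms(1) by blast
    moreover have "g (Suc N) \<le> g N" using assms(1) by blast
    ultimately show ?thesis by simp
  qed
qed

lemma size_gt_split:
  fixes A :: "nat multiset"
  shows "size (filter_mset (\<lambda>v. x < v) A) = count A (Suc x) + size (filter_mset (\<lambda>v. Suc x < v) A)"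
proof -
  have "filter_mset (\<lambda>v. x < v) A = filter_mset (\<lambda>v. v = Suc x) A + filter_mset (\<lambda>v. Suc x < v) A"
    by (rule multiset_eqI) auto
  then show ?thesis by (simp add: filter_eq_replicate_mset)
qed

lemma mset_eq_gt:
  fixes A B :: "nat multiset"
  assumes "\<forall>x. size (filter_mset (\<lambda>v. x < v) A) = size (filter_mset (\<lambda>v. x < v) B)"
    and "count A 0 = count B 0"
  shows "A = B"
proof (rule multiset_eqI)
  fix v
  show "count A v = count B v"
  proof (cases v)
    case 0 then show ?thesis using assms(2) by simp
  next
    case (Suc x)
    have "count A (Suc x) + size (filter_mset (\<lambda>v. Suc x < v) A) =
          count B (Suc x) + size (filter_mset (\<lambda>v. Suc x < v) B)"
      using assms(1) size_gt_split[of x A] size_gt_split[of x B] by metis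
    moreover have "size (filter_mset (\<lambda>v. Suc x < v) A) = size (filter_mset (\<lambda>v. Suc x < v) B)"
      using assms(1) by blast
    ultimately show ?thesis using Suc by simp
  qed
qed

lemma ch_nth:
  "ch p xs \<longleftrightarrow> (xs \<noteq> [] \<longrightarrow> hd xs \<le> Suc p) \<and> (\<forall>j. Suc j < length xs \<longrightarrow> xs ! Suc j \<le> Suc (xs ! j))"
proof (induction xs arbitrary: p)
  case Nil then show ?case by simp
next
  case (Cons x xs)
  have e: "(\<forall>j. Suc j < length (x # xs) \<longrightarrow> (x # xs) ! Suc j \<le> Suc ((x # xs) ! j)) \<longleftrightarrow>
      (xs \<noteq> [] \<longrightarrow> hd xs \<le> Suc x) \<and> (\<forall>j. Suc j < length xs \<longrightarrow> xs ! Suc j \<le> Suc (xs ! j))"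
  proof
    assume h: "\<forall>j. Suc j < length (x # xs) \<longrightarrow> (x # xs) ! Suc j \<le> Suc ((x # xs) ! j)"
    have "xs \<noteq> [] \<longrightarrow> hd xs \<le> Suc x"
    proof
      assume "xs \<noteq> []"
      then show "hd xs \<le> Suc x" using h[rule_format, of 0] by (simp add: hd_conv_nth)
    qed
    moreover have "\<forall>j. Suc j < length xs \<longrightarrow> xs ! Suc j \<le> Suc (xs ! j)"
      using h by (metis Suc_less_eq length_Cons nth_Cons_Suc)
    ultimately show "(xs \<noteq> [] \<longrightarrow> hd xs \<le> Suc x) \<and> (\<forall>j. Suc j < length xs \<longrightarrow> xs ! Suc j \<le> Suc (xs ! j))"
      by blast
  next
    assume h: "(xs \<noteq> [] \<longrightarrow> hd xs \<le> Suc x) \<and> (\<forall>j. Suc j < length xs \<longrightarrow> xs ! Suc j \<le> Suc (xs ! j))"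
    show "\<forall>j. Suc j < length (x # xs) \<longrightarrow> (x # xs) ! Suc j \<le> Suc ((x # xs) ! j)"
    proof (intro allI impI)
      fix j assume j: "Suc j < length (x # xs)"
      show "(x # xs) ! Suc j \<le> Suc ((x # xs) ! j)"
      proof (cases j)
        case 0
        then have "xs \<noteq> []" using j by auto
        then show ?thesis using h 0 by (simp add: hd_conv_nth)
      next
        case (Suc j')
        then show ?thesis using h j by simp
      qed
    qed
  qed
  show ?case using Cons.IH[of x] e by simp
qed

lemma back_bound:
  assumes "\<forall>j. Suc j < l \<longrightarrow> f (Suc j) \<le> Suc (f j)" "0 < l" "l + 1 \<le> f (l - 1)" "j < l"
  shows "j + 2 \<le> f j"
proof -
  have "t < l \<longrightarrow> f (l - 1) \<le> f (l - 1 - t) + t" for t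
  proof (induction t)
    case 0 then show ?case by simp
  next
    case (Suc t)
    show ?case
    proof
      assume st: "Suc t < l"
      have e: "Suc (l - 1 - Suc t) = l - 1 - t" using st by simp
      have "f (Suc (l - 1 - Suc t)) \<le> Suc (f (l - 1 - Suc t))"
      proof -
        have "Suc (l - 1 - Suc t) < l" using e st by simp
        then show ?thesis using assms(1) by blast
      qed
      then show "f (l - 1) \<le> f (l - 1 - Suc t) + Suc t" using Suc.IH st e by simp
    qed
  qed
  from this[of "l - 1 - j"] have "f (l - 1) \<le> f (l - 1 - (l - 1 - j)) + (l - 1 - j)" using assms(4) by simp
  moreover have "l - 1 - (l - 1 - j) = j" using assms(4) by simp
  ultimately show ?thesis using assms(3,4) by simp
qed


theorem proposition4p5:
  fixes n :: nat and d :: "nat \<Rightarrow> nat" and L q k :: nat and b :: "nat \<Rightarrow> nat"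
  assumes "n > 0"
    and "d \<in> Delta n"
    and "L = Max {i. d i > 0}"
    and "q = Max (range d)"
    and "b = (\<lambda>i. if i = L then d L else d i - d (i + 1))"
    and "q < k" and "k \<le> L"
  shows "card (diag_class n d \<inter> partitions_k n k) =
           ((b (k - 1) + b k) choose (b (k - 1) + 1))
         * (\<Prod>i\<in>{q..k - 2}. (b i + b (i + 1) + 1) choose (b i + 1))
         * (\<Prod>i\<in>{k..L - 1}. (b i + b (i + 1)) choose (b i))"
proof -
  from assms(2) obtain \<alpha>0 where \<alpha>0: "\<alpha>0 \<in> partitions n" and d\<alpha>0: "diag \<alpha>0 = d"
    unfolding Defs.Delta_def by auto
  have s0: "sorted_wrt (\<ge>) \<alpha>0" and z0: "0 \<notin> set \<alpha>0" and sum0: "sum_list \<alpha>0 = n"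
    using \<alpha>0 unfolding Defs.partitions_def by auto
  define l0 where "l0 = length \<alpha>0"
  have ne0: "\<alpha>0 \<noteq> []" using sum0 assms(1) by auto
  have dle: "d x \<le> l0" for x using diag_le_len[of \<alpha>0 x] d\<alpha>0 l0_def by simp
  have finr: "finite (range d)" by (rule finite_subset[of _ "{..l0}"]) (auto simp: dle)
  have dq: "d x \<le> q" for x using assms(4) finr by simp
  have qin: "q \<in> range d" using assms(4) finr Max_in by auto
  have dSuc: "d (Suc x) \<le> Suc (d x)" for x using diag_Suc_le[of \<alpha>0 x] d\<alpha>0 by simp
  have keyd: "d x < d (Suc x) \<Longrightarrow> d (Suc x) = Suc x" for x using key[OF s0 z0, of x] d\<alpha>0 by simp
  have dlex: "d x \<le> x" for x using diag_le[of \<alpha>0 x] d\<alpha>0 by simp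
  have d1: "d 1 = 1"
  proof -
    have "\<alpha>0 ! 0 \<in> set \<alpha>0" using ne0 by simp
    then have "\<alpha>0 ! 0 \<noteq> 0" using z0 by metis
    then have "{j. j < length \<alpha>0 \<and> j < 1 \<and> 1 \<le> \<alpha>0 ! j + j} = {0}" using ne0 by auto
    then show ?thesis using d\<alpha>0 diag_alt[of \<alpha>0 1] by simp
  qed
  have q1: "1 \<le> q" using dq[of 1] d1 by simp
  have P2: "d (Suc x) \<le> d x" if "q \<le> x" for x
  proof (rule ccontr)
    assume "\<not> d (Suc x) \<le> d x"
    then have "d (Suc x) = Suc x" using keyd by simp
    then show False using dq[of "Suc x"] that by simp
  qed
  have P1: "d v = v" if vq: "v \<le> q" for v
  proof (rule ccontr)
    assume "d v \<noteq> v"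
    then have dv: "d v < v" using dlex[of v] by simp
    have mono: "d (v + t) \<le> d v" for t
    proof (induction t)
      case 0 show ?case by simp
    next
      case (Suc t)
      show ?case
      proof (rule ccontr)
        assume "\<not> d (v + Suc t) \<le> d v"
        then have "d (v + t) < d (Suc (v + t))" using Suc.IH by simp
        then have "d (Suc (v + t)) = Suc (v + t)" using keyd by blast
        moreover have "d (Suc (v + t)) \<le> Suc (d (v + t))" by (rule dSuc)
        ultimately show False using Suc.IH dv by simp
      qed
    qed
    have allx: "d x < v" for x
    proof (cases "x < v")
      case True then show ?thesis using dlex[of x] by simp
    next
      case False
      then have "x = v + (x - v)" by simp
      then have "d x \<le> d v" using mono[of "x - v"] by metis
      then show ?thesis using dv by simp
    qed
    obtain x where "q = d x" using qin by auto
    then show False using allx[of x] vq by simp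
  qed
  have dbig: "d x = 0" if "n + l0 \<le> x" for x
  proof -
    have "\<forall>j<length \<alpha>0. \<alpha>0 ! j + j < x"
    proof (intro allI impI)
      fix j assume j: "j < length \<alpha>0"
      then have "\<alpha>0 ! j \<le> n" using sum0 member_le_sum_list[of "\<alpha>0 ! j" \<alpha>0] by simp
      then show "\<alpha>0 ! j + j < x" using j that l0_def by simp
    qed
    then show ?thesis using diag_zero_big d\<alpha>0 by metis
  qed
  have finL: "finite {i. d i > 0}"
  proof (rule finite_subset[of _ "{..<n + l0}"])
    show "{i. d i > 0} \<subseteq> {..<n + l0}"
    proof
      fix x assume "x \<in> {i. d i > 0}"
      then have "d x \<noteq> 0" by simp
      then have "\<not> n + l0 \<le> x" using dbig[of x] by auto
      then show "x \<in> {..<n + l0}" by simp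
    qed
  qed simp
  have L1: "1 \<in> {i. d i > 0}" using d1 by simp
  have dL: "0 < d L" using Max_in[OF finL] L1 assms(3) by auto
  have dgt: "d i = 0" if "L < i" for i
  proof (rule ccontr)
    assume "d i \<noteq> 0"
    then have "i \<le> L" using Max_ge[OF finL, of i] assms(3) by simp
    then show False using that by simp
  qed
  have bdef: "b = (\<lambda>i. d i - d (Suc i))"
    using assms(5) dgt[of "Suc L"] by (auto intro!: ext)
  have kq: "q < k" "k \<le> L" using assms(6,7) by auto
  have k2: "2 \<le> k" using kq q1 by simp
  define g where "g x = d x + (k - x)" for x
  have gmono: "\<forall>x. g (Suc x) \<le> g x"
  proof
    fix x
    show "g (Suc x) \<le> g x"
    proof (cases "x < k")
      case True
      then show ?thesis unfolding g_def using dSuc[of x] by simp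
    next
      case False
      then show ?thesis unfolding g_def using P2[of x] kq by simp
    qed
  qed
  have gzero: "g x = 0" if "Suc L \<le> x" for x
    unfolding g_def using dgt[of x] that kq by simp
  define C where "C = Cm g (Suc L)"
  have cC: "count C v = (if 1 \<le> v \<and> v \<le> Suc L then g (v - 1) - g v else 0)" for v
    unfolding C_def by (rule Cm_count)
  have sC: "set_mset C \<subseteq> {1..Suc L}" unfolding C_def by (rule Cm_set)
  have fC: "size (filter_mset (\<lambda>v. x < v) C) = g x" for x
  proof (cases "x \<le> Suc L")
    case True
    then show ?thesis unfolding C_def using Cm_filter[OF gmono True] gzero[of "Suc L"] by simp
  next
    case False
    have "filter_mset (\<lambda>v. x < v) C = {#}" using sC False by (auto simp: filter_mset_eq_conv)
    then show ?thesis using gzero[of x] False by simp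
  qed
  define cls where "cls = diag_class n d \<inter> partitions_k n k"
  have cls_mem: "\<alpha> \<in> cls \<longleftrightarrow> sorted_wrt (\<ge>) \<alpha> \<and> 0 \<notin> set \<alpha> \<and> sum_list \<alpha> = n \<and> diag \<alpha> = d \<and> length \<alpha> = k"
    for \<alpha>
    unfolding cls_def Defs.diag_class_def Defs.partitions_k_def Defs.partitions_def by auto
  define enc :: "nat list \<Rightarrow> nat list" where "enc \<alpha> = map (\<lambda>j. \<alpha> ! j + j + 1) [0..<length \<alpha>]" for \<alpha>
  have enc_len: "length (enc \<alpha>) = length \<alpha>" for \<alpha> unfolding enc_def by simp
  have enc_nth: "j < length \<alpha> \<Longrightarrow> enc \<alpha> ! j = \<alpha> ! j + j + 1" for \<alpha> j unfolding enc_def by simp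
  have enc_f: "size (filter_mset (\<lambda>v. x < v) (mset (enc \<alpha>))) = card {j. j < length \<alpha> \<and> x \<le> \<alpha> ! j + j}"
    for \<alpha> x
  proof -
    have "size (filter_mset (\<lambda>v. x < v) (mset (enc \<alpha>))) = length (filter (\<lambda>v. x < v) (enc \<alpha>))"
      by (metis mset_filter size_mset)
    also have "\<dots> = card {j. j < length (enc \<alpha>) \<and> x < enc \<alpha> ! j}" by (rule length_filter_conv_card)
    also have "{j. j < length (enc \<alpha>) \<and> x < enc \<alpha> ! j} = {j. j < length \<alpha> \<and> x \<le> \<alpha> ! j + j}"
      using enc_len enc_nth by auto
    finally show ?thesis .
  qed
  have enc_0: "count (mset (enc \<alpha>)) 0 = 0" for \<alpha>
  proof -
    have "0 \<notin> set (enc \<alpha>)" unfolding enc_def by auto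
    then show ?thesis by (simp add: count_mset_0_iff)
  qed
  have img: "enc ` cls = SS (Suc L) C (Suc k)"
  proof
    show "enc ` cls \<subseteq> SS (Suc L) C (Suc k)"
    proof
      fix xs assume "xs \<in> enc ` cls"
      then obtain \<alpha> where \<alpha>: "\<alpha> \<in> cls" and xs: "xs = enc \<alpha>" by auto
      have s: "sorted_wrt (\<ge>) \<alpha>" and z: "0 \<notin> set \<alpha>" and d\<alpha>: "diag \<alpha> = d" and l\<alpha>: "length \<alpha> = k"
        using \<alpha> cls_mem by auto
      have ms: "mset xs = C"
      proof (rule mset_eq_gt)
        show "\<forall>x. size (filter_mset (\<lambda>v. x < v) (mset xs)) = size (filter_mset (\<lambda>v. x < v) C)"
        proof
          fix x
          have "size (filter_mset (\<lambda>v. x < v) (mset xs)) = diag \<alpha> x + (length \<alpha> - x)"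
            unfolding xs enc_f diag_len ..
          also have "\<dots> = g x" unfolding g_def d\<alpha> l\<alpha> ..
          finally show "size (filter_mset (\<lambda>v. x < v) (mset xs)) = size (filter_mset (\<lambda>v. x < v) C)"
            using fC by simp
        qed
        show "count (mset xs) 0 = count C 0" using enc_0 cC xs by simp
      qed
      have chx: "ch (Suc L) xs"
        unfolding ch_nth
      proof
        show "xs \<noteq> [] \<longrightarrow> hd xs \<le> Suc (Suc L)"
        proof
          assume "xs \<noteq> []"
          then have "hd xs \<in> set xs" by simp
          then have "hd xs \<in># C" using ms by auto
          then show "hd xs \<le> Suc (Suc L)" using sC by auto
        qed
        show "\<forall>j. Suc j < length xs \<longrightarrow> xs ! Suc j \<le> Suc (xs ! j)"
        proof (intro allI impI)
          fix j assume j: "Suc j < length xs"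
          then have "\<alpha> ! Suc j \<le> \<alpha> ! j" using sorted_wrt_nth_less[OF s, of j "Suc j"] xs enc_len by simp
          then show "xs ! Suc j \<le> Suc (xs ! j)" using j xs enc_len enc_nth by simp
        qed
      qed
      have lastx: "xs \<noteq> [] \<longrightarrow> Suc k \<le> last xs"
      proof
        assume xne: "xs \<noteq> []"
        have kpos: "0 < k" using kq by simp
        have "last xs = xs ! (k - 1)" using xne xs enc_len l\<alpha> by (simp add: last_conv_nth)
        also have "\<dots> = \<alpha> ! (k - 1) + (k - 1) + 1" using xs enc_nth l\<alpha> kpos by simp
        finally have lx: "last xs = \<alpha> ! (k - 1) + (k - 1) + 1" .
        have "\<alpha> ! (k - 1) \<in> set \<alpha>" using l\<alpha> kpos by simp
        then have "\<alpha> ! (k - 1) \<noteq> 0" using z by metis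
        then show "Suc k \<le> last xs" using lx kpos by simp
      qed
      show "xs \<in> SS (Suc L) C (Suc k)" unfolding SS_def using ms chx lastx by simp
    qed
  next
    show "SS (Suc L) C (Suc k) \<subseteq> enc ` cls"
    proof
      fix xs assume xs: "xs \<in> SS (Suc L) C (Suc k)"
      have ms: "mset xs = C" and chx: "ch (Suc L) xs" and la: "xs \<noteq> [] \<longrightarrow> Suc k \<le> last xs"
        using xs unfolding SS_def by auto
      have "filter_mset (\<lambda>v. 0 < v) C = C" using sC by (auto simp: filter_mset_eq_conv)
      then have "size C = g 0" using fC[of 0] by simp
      then have len: "length xs = k" using ms dlex[of 0] unfolding g_def by (metis size_mset le_zero_eq add_0 minus_nat.diff_0)
      have steps: "\<forall>j. Suc j < k \<longrightarrow> xs ! Suc j \<le> Suc (xs ! j)" using chx len unfolding ch_nth by simp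
      have kpos: "0 < k" using kq by simp
      have xne: "xs \<noteq> []" using len kpos by auto
      have lst: "k + 1 \<le> xs ! (k - 1)" using la xne len by (simp add: last_conv_nth)
      have big: "j + 2 \<le> xs ! j" if "j < k" for j
        using back_bound[of k "\<lambda>j. xs ! j", OF steps kpos lst that] .
      define \<alpha> where "\<alpha> = map (\<lambda>j. xs ! j - j - 1) [0..<k]"
      have l\<alpha>: "length \<alpha> = k" unfolding \<alpha>_def by simp
      have n\<alpha>: "j < k \<Longrightarrow> \<alpha> ! j = xs ! j - j - 1" for j unfolding \<alpha>_def by simp
      have enc\<alpha>: "enc \<alpha> = xs"
      proof (rule nth_equalityI)
        show "length (enc \<alpha>) = length xs" using enc_len l\<alpha> len by simp
        fix j assume "j < length (enc \<alpha>)"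
        then have j: "j < k" using enc_len l\<alpha> by simp
        show "enc \<alpha> ! j = xs ! j" using enc_nth[of j \<alpha>] l\<alpha> n\<alpha>[OF j] big[OF j] j by simp
      qed
      have s: "sorted_wrt (\<ge>) \<alpha>"
      proof -
        have "transp ((\<ge>) :: nat \<Rightarrow> nat \<Rightarrow> bool)" by (auto simp: transp_def)
        moreover have "\<forall>i. Suc i < length \<alpha> \<longrightarrow> \<alpha> ! i \<ge> \<alpha> ! Suc i"
        proof (intro allI impI)
          fix i assume i: "Suc i < length \<alpha>"
          then have "xs ! Suc i \<le> Suc (xs ! i)" using steps l\<alpha> by simp
          moreover have "i + 2 \<le> xs ! i" using big i l\<alpha> by simp
          ultimately show "\<alpha> ! i \<ge> \<alpha> ! Suc i" using n\<alpha> i l\<alpha> by simp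
        qed
        ultimately show ?thesis using sorted_wrt_iff_nth_Suc_transp by blast
      qed
      have z: "0 \<notin> set \<alpha>"
      proof
        assume "0 \<in> set \<alpha>"
        then obtain j where j: "j < length \<alpha>" "\<alpha> ! j = 0" by (auto simp: in_set_conv_nth)
        then show False using n\<alpha>[of j] big[of j] l\<alpha> by simp
      qed
      have d\<alpha>: "diag \<alpha> = d"
      proof
        fix x
        have "diag \<alpha> x + (k - x) = card {j. j < length \<alpha> \<and> x \<le> \<alpha> ! j + j}"
          using diag_len[of \<alpha> x] l\<alpha> by simp
        also have "\<dots> = size (filter_mset (\<lambda>v. x < v) (mset (enc \<alpha>)))" by (rule enc_f[symmetric])
        also have "\<dots> = g x" using enc\<alpha> ms fC by simp
        finally show "diag \<alpha> x = d x" unfolding g_def by simp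
      qed
      have sum\<alpha>: "sum_list \<alpha> = n"
      proof -
        define N where "N = Suc L + n + l0 + 1"
        have b1: "\<forall>j<length \<alpha>. \<alpha> ! j + j < N"
        proof (intro allI impI)
          fix j assume j: "j < length \<alpha>"
          then have "xs ! j \<in> set xs" using l\<alpha> len by simp
          then have "xs ! j \<in># C" using ms by auto
          then have "xs ! j \<le> Suc L" using sC by auto
          then show "\<alpha> ! j + j < N" using n\<alpha>[of j] j l\<alpha> big[of j] unfolding N_def by simp
        qed
        have b2: "\<forall>j<length \<alpha>0. \<alpha>0 ! j + j < N"
        proof (intro allI impI)
          fix j assume j: "j < length \<alpha>0"
          then have "\<alpha>0 ! j \<le> n" using sum0 member_le_sum_list[of "\<alpha>0 ! j" \<alpha>0] by simp
          then show "\<alpha>0 ! j + j < N" using j l0_def unfolding N_def by simp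
        qed
        have "sum_list \<alpha> = (\<Sum>x<N. diag \<alpha> x)" by (rule diag_sum[OF b1])
        also have "\<dots> = (\<Sum>x<N. diag \<alpha>0 x)" using d\<alpha> d\<alpha>0 by simp
        also have "\<dots> = sum_list \<alpha>0" by (rule diag_sum[OF b2, symmetric])
        finally show ?thesis using sum0 by simp
      qed
      have "\<alpha> \<in> cls" using cls_mem s z sum\<alpha> d\<alpha> l\<alpha> by simp
      then show "xs \<in> enc ` cls" using enc\<alpha> by force
    qed
  qed
  have inj: "inj_on enc cls"
  proof (rule inj_onI)
    fix \<alpha> \<beta> assume a: "\<alpha> \<in> cls" and bb: "\<beta> \<in> cls" and e: "enc \<alpha> = enc \<beta>"
    have la: "length \<alpha> = k" and lb: "length \<beta> = k" using a bb cls_mem by auto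
    show "\<alpha> = \<beta>"
    proof (rule nth_equalityI)
      show "length \<alpha> = length \<beta>" using la lb by simp
      fix j assume "j < length \<alpha>"
      then have "enc \<alpha> ! j = enc \<beta> ! j" "j < length \<beta>" using e la lb by auto
      then show "\<alpha> ! j = \<beta> ! j" using enc_nth \<open>j < length \<alpha>\<close> by fastforce
    qed
  qed
  have card_cls: "card cls = card (SS (Suc L) C (Suc k))"
    using card_image[OF inj] img by simp
  have c_hi: "count C (Suc i) = b i" if "k \<le> i" "i \<le> L" for i
    using cC[of "Suc i"] that unfolding g_def bdef by simp
  have c_lo: "count C (Suc i) = b i + 1" if "q \<le> i" "i < k" for i
  proof -
    have "d (Suc i) \<le> d i" using P2 that by simp
    moreover have "Suc i \<le> Suc L" using that kq by simp
    ultimately show ?thesis using cC[of "Suc i"] that unfolding g_def bdef by simp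
  qed
  have c_0: "count C v = 0" if "v \<le> q" for v
  proof (cases v)
    case 0 then show ?thesis using cC by simp
  next
    case (Suc u)
    have "d v = v" "d u = u" using P1 that Suc by auto
    then show ?thesis using cC[of v] Suc that kq unfolding g_def by simp
  qed
  have sym: "(x + y choose x) = (x + y choose y)" for x y :: nat
    using binomial_symmetric[of x "x + y"] by simp
  define C1 where "C1 = filter_mset (\<lambda>x. x \<le> Suc k) C"
  have ph1: "card (SS (Suc L) C (Suc k)) =
     (\<Prod>v\<in>{Suc (Suc k)..Suc L}. (count C v + count C (v - 1)) choose count C v) * card (SS (Suc k) C1 (Suc k))"
    unfolding C1_def by (rule phase1) (use kq sC in auto)
  have L1': "1 \<le> L" using kq by simp
  have Phi: "(\<Prod>v\<in>{Suc (Suc k)..Suc L}. (count C v + count C (v - 1)) choose count C v) =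
      (\<Prod>i\<in>{k..L - 1}. (b i + b (i + 1)) choose (b i))"
  proof -
    have LL: "L - 1 + 2 = Suc L" using L1' by simp
    have e: "{Suc (Suc k)..Suc L} = {k + 2..(L - 1) + 2}" unfolding LL by simp
    have "(\<Prod>v\<in>{Suc (Suc k)..Suc L}. (count C v + count C (v - 1)) choose count C v) =
        (\<Prod>i\<in>{k..L - 1}. (count C (i + 2) + count C (i + 2 - 1)) choose count C (i + 2))"
      unfolding e by (rule prod.shift_bounds_cl_nat_ivl)
    also have "\<dots> = (\<Prod>i\<in>{k..L - 1}. (b i + b (i + 1)) choose (b i))"
    proof (rule prod.cong)
      fix i assume i: "i \<in> {k..L - 1}"
      have iL: "Suc i \<le> L" "k \<le> i" using i L1' by auto
      have "count C (i + 2) = b (i + 1)" using c_hi[of "Suc i"] iL by simp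
      moreover have "count C (i + 2 - 1) = b i" using c_hi[of i] iL by simp
      ultimately show "(count C (i + 2) + count C (i + 2 - 1)) choose count C (i + 2) =
          (b i + b (i + 1)) choose (b i)" using sym[of "b (i + 1)" "b i"] by (simp add: add.commute)
    qed simp
    finally show ?thesis .
  qed
  have cnt1: "count C1 v = (if v \<le> Suc k then count C v else 0)" for v
    unfolding C1_def by simp
  have ck: "count C k = b (k - 1) + 1" using c_lo[of "k - 1"] kq q1 by simp
  have cSk: "count C (Suc k) = b k" using c_hi[of k] kq by simp
  have sC1: "set_mset C1 \<subseteq> {..Suc k}" unfolding C1_def by auto
  show ?thesis
  proof (cases "b k = 0")
    case True
    have "SS (Suc k) C1 (Suc k) = {}"
    proof (rule SS_empty)
      show "set_mset C1 \<subseteq> {..<Suc k}"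
      proof
        fix v assume "v \<in># C1"
        then have "count C1 v > 0" by simp
        then have "v \<le> Suc k" "count C v > 0" using cnt1[of v] by (auto split: if_splits)
        then show "v \<in> {..<Suc k}" using cSk True by (cases "v = Suc k") auto
      qed
      show "C1 \<noteq> {#}"
      proof
        assume "C1 = {#}"
        then have "count C1 k = 0" by simp
        then show False using cnt1[of k] ck by simp
      qed
    qed
    then have "card cls = 0" using card_cls ph1 by simp
    moreover have "((b (k - 1) + b k) choose (b (k - 1) + 1)) = 0" using True by simp
    ultimately show ?thesis unfolding cls_def by (simp only: mult_zero_left)
  next
    case False
    define C1' where "C1' = C1 - {#Suc k#}"
    define C2 where "C2 = filter_mset (\<lambda>x. x \<noteq> Suc k) C1'"
    have top: "card (SS (Suc k) C1 (Suc k)) = card (SS (Suc k) C1' k)"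
      using SS_top[OF sC1] cnt1[of "Suc k"] cSk False unfolding C1'_def by simp
    have sC1': "set_mset C1' \<subseteq> {..Suc k}" using sC1 unfolding C1'_def by (meson in_diffD subset_iff)
    have rec: "card (SS (Suc k) C1' k) =
        (count C1' (Suc k) + count C1' k choose count C1' (Suc k)) * card (SS k C2 k)"
      using SS_rec[OF _ sC1', of k] unfolding C2_def by simp
    have "count C1' (Suc k) = b k - 1" "count C1' k = b (k - 1) + 1"
      unfolding C1'_def using cnt1 cSk ck by auto
    then have thr: "(count C1' (Suc k) + count C1' k choose count C1' (Suc k)) =
        ((b (k - 1) + b k) choose (b (k - 1) + 1))"
      using sym[of "b k - 1" "b (k - 1) + 1"] False by (simp add: add.commute)
    have cnt2: "count C2 v = (if v \<le> k then count C v else 0)" for v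
      unfolding C2_def C1'_def using cnt1 by auto
    have sC2: "set_mset C2 \<subseteq> {1..k}"
    proof
      fix v assume "v \<in># C2"
      then have "count C2 v > 0" by simp
      then have "v \<le> k" "count C v > 0" using cnt2[of v] by (auto split: if_splits)
      then show "v \<in> {1..k}" using sC by (auto simp: count_greater_zero_iff)
    qed
    have zp: "\<forall>v. 1 \<le> v \<longrightarrow> v \<le> k \<longrightarrow> count C2 v = 0 \<longrightarrow> (\<forall>u<v. count C2 u = 0)"
    proof (intro allI impI)
      fix v u assume v: "1 \<le> v" "v \<le> k" "count C2 v = 0" and u: "u < v"
      have "v \<le> q"
      proof (rule ccontr)
        assume "\<not> v \<le> q"
        then have "count C (Suc (v - 1)) = b (v - 1) + 1" using c_lo[of "v - 1"] v by simp
        then show False using v cnt2[of v] by simp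
      qed
      then show "count C2 u = 0" using c_0[of u] u cnt2[of u] by simp
    qed
    have ph2: "card (SS k C2 k) = (\<Prod>v\<in>{1..k}. if count C2 v = 0 then 1
            else (count C2 v - 1 + count C2 (v - 1)) choose (count C2 v - 1))"
      by (rule phase2[OF sC2 zp])
    define h where "h v = (if count C v = 0 then 1 else (count C v - 1 + count C (v - 1)) choose (count C v - 1))" for v
    have ph2': "card (SS k C2 k) = (\<Prod>v\<in>{1..k}. h v)"
      unfolding ph2 h_def by (rule prod.cong) (auto simp: cnt2)
    have Plo: "(\<Prod>v\<in>{1..k}. h v) = (\<Prod>i\<in>{q..k - 2}. (b i + b (i + 1) + 1) choose (b i + 1))"
    proof -
      have un: "{1..k} = {1..Suc q} \<union> {Suc (Suc q)..k}" using kq by auto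
      have "(\<Prod>v\<in>{1..k}. h v) = (\<Prod>v\<in>{1..Suc q}. h v) * (\<Prod>v\<in>{Suc (Suc q)..k}. h v)"
        unfolding un by (rule prod.union_disjoint) auto
      also have "(\<Prod>v\<in>{1..Suc q}. h v) = 1"
      proof (rule prod.neutral, intro ballI)
        fix v assume v: "v \<in> {1..Suc q}"
        show "h v = 1"
        proof (cases "v \<le> q")
          case True then show ?thesis unfolding h_def using c_0 by simp
        next
          case False
          then have "v = Suc q" using v by simp
          then show ?thesis unfolding h_def using c_lo[of q] c_0[of q] kq by simp
        qed
      qed
      also have "(\<Prod>v\<in>{Suc (Suc q)..k}. h v) = (\<Prod>i\<in>{q..k - 2}. (b i + b (i + 1) + 1) choose (b i + 1))"
      proof -
      have kk: "k - 2 + 2 = k" using k2 by simp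
      have e: "{Suc (Suc q)..k} = {q + 2..(k - 2) + 2}" unfolding kk by simp
      have "(\<Prod>v\<in>{Suc (Suc q)..k}. h v) = (\<Prod>i\<in>{q..k - 2}. h (i + 2))"
        unfolding e by (rule prod.shift_bounds_cl_nat_ivl)
      also have "\<dots> = (\<Prod>i\<in>{q..k - 2}. (b i + b (i + 1) + 1) choose (b i + 1))"
      proof (rule prod.cong)
        fix i assume i: "i \<in> {q..k - 2}"
        have ik: "q \<le> i" "Suc i < k" using i k2 by auto
        have a1: "count C (i + 2) = b (i + 1) + 1" using c_lo[of "Suc i"] ik by simp
        have a2: "count C (i + 2 - 1) = b i + 1" using c_lo[of i] ik by simp
        show "h (i + 2) = (b i + b (i + 1) + 1) choose (b i + 1)"
          unfolding h_def using a1 a2 sym[of "b (i + 1)" "b i + 1"] by (simp add: add.commute add.left_commute)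
      qed simp
      finally show ?thesis .
      qed
      finally show ?thesis by simp
    qed
    have "card cls = (\<Prod>i\<in>{k..L - 1}. (b i + b (i + 1)) choose (b i)) *
        (((b (k - 1) + b k) choose (b (k - 1) + 1)) * (\<Prod>i\<in>{q..k - 2}. (b i + b (i + 1) + 1) choose (b i + 1)))"
      using card_cls ph1 Phi top rec thr ph2' Plo by simp
    then show ?thesis unfolding cls_def by (simp add: mult.commute mult.left_commute)
  qed
qed

end
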